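(* Let $(A,\vee,\wedge,\bot,\top)$ be a bounded distributive lattice, and let $\mathcal{L}=(Expr_{\mathcal{L}},Th_{\mathcal{L}},\mathcal{C}_{\mathcal{L}})$ with $Expr_{\mathcal{L}}=A$, $Th_{\mathcal{L}}$ the set of proper filters of $A$, and $\mathcal{C}_{\mathcal{L}}=\{\vee,\wedge,\bot,\top\}$. Then $\mathcal{L}$ is a distributive abstract logic.
   Context: An abstract logic is a triple $\mathcal{L}=(Expr_{\mathcal{L}},Th_{\mathcal{L}},\mathcal{C}_{\mathcal{L}})$ where $Expr_{\mathcal{L}}$ is a set, $Th_{\mathcal{L}}$ a non-empty set of subsets of $Expr_{\mathcal{L}}$ (theories) with $\bigcap\mathcal{T}\in Th_{\mathcal{L}}$ for every non-empty $\mathcal{T}\subseteq Th_{\mathcal{L}}$, and $\mathcal{C}_{\mathcal{L}}$ a set of operations on $Expr_{\mathcal{L}}$. $\mathcal{L}$ is closed under union of chains if the union of every non-empty chain of theories is a theory. A theory $T$ is totally prime if whenever $T=\bigcap\mathcal{T}$ for a non-empty $\mathcal{T}\subseteq Th_{\mathcal{L}}$ (of any cardinality), $T\in\mathcal{T}$; $TPTh_{\mathcal{L}}$ is the set of totally prime theories. A distributive abstract logic is an abstract logic closed under union of chains with binary connectives $\vee,\wedge\in\mathcal{C}_{\mathcal{L}}$ such that for all $a,b$ and all $T\in TPTh_{\mathcal{L}}$: $a\vee b\in T$ iff $a\in T$ or $b\in T$; $a\wedge b\in T$ iff $a\in T$ and $b\in T$. *)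

theory Defs
  imports Main
begin

text \<open>Operations of an abstract logic are represented as pairs (arity, operation),
  where the operation acts on argument lists of length equal to the arity.\<close>

definition nullop :: "'a \<Rightarrow> nat \<times> ('a list \<Rightarrow> 'a)" where
  "nullop c = (0, \<lambda>_. c)"

definition binop :: "('a \<Rightarrow> 'a \<Rightarrow> 'a) \<Rightarrow> nat \<times> ('a list \<Rightarrow> 'a)" where
  "binop f = (2, \<lambda>xs. f (xs ! 0) (xs ! 1))"

definition abstract_logic ::
  "'a set \<Rightarrow> 'a set set \<Rightarrow> (nat \<times> ('a list \<Rightarrow> 'a)) set \<Rightarrow> bool" where
  "abstract_logic Expr Th C \<longleftrightarrow>
     Th \<noteq> {} \<and> (\<forall>T\<in>Th. T \<subseteq> Expr) \<and>
     (\<forall>\<T>. \<T> \<subseteq> Th \<and> \<T> \<noteq> {} \<longrightarrow> \<Inter>\<T> \<in> Th) \<and>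
     (\<forall>(n, f)\<in>C. \<forall>xs. length xs = n \<and> set xs \<subseteq> Expr \<longrightarrow> f xs \<in> Expr)"

definition closed_under_union_of_chains :: "'a set set \<Rightarrow> bool" where
  "closed_under_union_of_chains Th \<longleftrightarrow>
     (\<forall>\<T>. \<T> \<subseteq> Th \<and> \<T> \<noteq> {} \<and> (\<forall>X\<in>\<T>. \<forall>Y\<in>\<T>. X \<subseteq> Y \<or> Y \<subseteq> X)
        \<longrightarrow> \<Union>\<T> \<in> Th)"

definition totally_prime :: "'a set set \<Rightarrow> 'a set \<Rightarrow> bool" where
  "totally_prime Th T \<longleftrightarrow> T \<in> Th \<and>
     (\<forall>\<T>. \<T> \<subseteq> Th \<and> \<T> \<noteq> {} \<and> T = \<Inter>\<T> \<longrightarrow> T \<in> \<T>)"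

definition TPTh :: "'a set set \<Rightarrow> 'a set set" where
  "TPTh Th = {T. totally_prime Th T}"

definition distributive_abstract_logic ::
  "'a set \<Rightarrow> 'a set set \<Rightarrow> (nat \<times> ('a list \<Rightarrow> 'a)) set
     \<Rightarrow> ('a \<Rightarrow> 'a \<Rightarrow> 'a) \<Rightarrow> ('a \<Rightarrow> 'a \<Rightarrow> 'a) \<Rightarrow> bool" where
  "distributive_abstract_logic Expr Th C jn mt \<longleftrightarrow>
     abstract_logic Expr Th C \<and> closed_under_union_of_chains Th \<and>
     binop jn \<in> C \<and> binop mt \<in> C \<and>
     (\<forall>a\<in>Expr. \<forall>b\<in>Expr. \<forall>T\<in>TPTh Th.
        (jn a b \<in> T \<longleftrightarrow> a \<in> T \<or> b \<in> T) \<and>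
        (mt a b \<in> T \<longleftrightarrow> a \<in> T \<and> b \<in> T))"

definition proper_filter :: "'a::bounded_lattice set \<Rightarrow> bool" where
  "proper_filter F \<longleftrightarrow>
     top \<in> F \<and> (\<forall>x\<in>F. \<forall>y. x \<le> y \<longrightarrow> y \<in> F) \<and>
     (\<forall>x\<in>F. \<forall>y\<in>F. inf x y \<in> F) \<and> F \<noteq> UNIV"

end

theory Submission
  imports Defs
begin

lemma pf_bot:
  fixes F :: "'a::{distrib_lattice, bounded_lattice} set"
  assumes "proper_filter F" shows "bot \<notin> F"
proof
  assume "bot \<in> F"
  then have "\<forall>y. y \<in> F" using assms unfolding proper_filter_def by auto
  then show False using assms unfolding proper_filter_def by auto
qed

definition genf :: "'a::{distrib_lattice, bounded_lattice} set \<Rightarrow> 'a \<Rightarrow> 'a set" where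
  "genf T a = {y. \<exists>t\<in>T. inf t a \<le> y}"

lemma genf_filter:
  fixes T :: "'a::{distrib_lattice, bounded_lattice} set"
  assumes "proper_filter T" "genf T a \<noteq> UNIV"
  shows "proper_filter (genf T a)"
  unfolding proper_filter_def
proof (intro conjI ballI allI impI)
  show "top \<in> genf T a" using assms(1) unfolding genf_def proper_filter_def by auto
  show "y \<in> genf T a" if "x \<in> genf T a" "x \<le> y" for x y
    using that unfolding genf_def by (auto intro: order_trans)
  show "inf x y \<in> genf T a" if hx: "x \<in> genf T a" and hy: "y \<in> genf T a" for x y
  proof -
    obtain t1 where t1: "t1 \<in> T" "inf t1 a \<le> x" using hx unfolding genf_def by auto
    obtain t2 where t2: "t2 \<in> T" "inf t2 a \<le> y" using hy unfolding genf_def by auto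
    have "inf t1 t2 \<in> T" using assms(1) t1 t2 unfolding proper_filter_def by auto
    moreover have "inf (inf t1 t2) a \<le> inf x y" using t1 t2
      by (metis inf.coboundedI1 inf.coboundedI2 inf_mono inf_sup_aci(1) inf_sup_aci(2) inf_left_idem le_inf_iff)
    ultimately show ?thesis unfolding genf_def by auto
  qed
  show "genf T a \<noteq> UNIV" by fact
qed

lemma genf_mem: "proper_filter T \<Longrightarrow> a \<in> genf T a"
  unfolding genf_def proper_filter_def by auto

lemma genf_sup:
  fixes T :: "'a::{distrib_lattice, bounded_lattice} set"
  assumes "proper_filter T" "sup a b \<in> T"
  shows "genf T a \<inter> genf T b \<subseteq> T"
proof
  fix y assume "y \<in> genf T a \<inter> genf T b"
  then obtain t1 t2 where t: "t1 \<in> T" "inf t1 a \<le> y" "t2 \<in> T" "inf t2 b \<le> y"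
    unfolding genf_def by auto
  have m: "inf (inf t1 t2) (sup a b) \<in> T" using assms t unfolding proper_filter_def by auto
  have "inf (inf t1 t2) (sup a b) = sup (inf (inf t1 t2) a) (inf (inf t1 t2) b)"
    by (simp add: inf_sup_distrib1)
  also have "\<dots> \<le> y" using t
    by (meson inf.coboundedI1 inf.coboundedI2 inf_le1 inf_le2 le_inf_iff le_supI order_trans)
  finally show "y \<in> T" using m assms(1) unfolding proper_filter_def by auto
qed

theorem lemma3p8:
  assumes "(bot::'a::{distrib_lattice, bounded_lattice}) \<noteq> top"
  shows "distributive_abstract_logic (UNIV::'a set) {F. proper_filter F}
           {binop sup, binop inf, nullop bot, nullop top} sup inf"
proof -
  let ?Th = "{F::'a set. proper_filter F}"
  have top: "proper_filter {top::'a}"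
    unfolding proper_filter_def using assms top.extremum_unique by auto
  have inter: "\<Inter>\<T> \<in> ?Th" if hT: "\<T> \<subseteq> ?Th" "\<T> \<noteq> {}" for \<T>
  proof -
    obtain F where F: "F \<in> \<T>" using hT by auto
    have "bot \<notin> F" using pf_bot F hT by auto
    then have "\<Inter>\<T> \<noteq> UNIV" using F by auto
    moreover have "\<forall>G\<in>\<T>. proper_filter G" using hT by auto
    ultimately show ?thesis unfolding proper_filter_def mem_Collect_eq
      by (intro conjI) (blast, meson InterD InterI, meson InterD InterI, simp)
  qed
  have al: "abstract_logic (UNIV::'a set) ?Th {binop sup, binop inf, nullop bot, nullop top}"
    unfolding abstract_logic_def using top inter by blast
  have ch: "closed_under_union_of_chains ?Th"
    unfolding closed_under_union_of_chains_def
  proof (intro allI impI)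
    fix \<T> :: "'a set set" assume h: "\<T> \<subseteq> ?Th \<and> \<T> \<noteq> {} \<and> (\<forall>X\<in>\<T>. \<forall>Y\<in>\<T>. X \<subseteq> Y \<or> Y \<subseteq> X)"
    have pf: "\<And>F. F \<in> \<T> \<Longrightarrow> proper_filter F" using h by auto
    have "bot \<notin> \<Union>\<T>" using pf pf_bot by blast
    moreover have "top \<in> \<Union>\<T>" using h pf unfolding proper_filter_def by blast
    moreover have "\<forall>x\<in>\<Union>\<T>. \<forall>y. x \<le> y \<longrightarrow> y \<in> \<Union>\<T>"
      using pf unfolding proper_filter_def by blast
    moreover have "\<forall>x\<in>\<Union>\<T>. \<forall>y\<in>\<Union>\<T>. inf x y \<in> \<Union>\<T>"
    proof (intro ballI)
      fix x y assume "x \<in> \<Union>\<T>" "y \<in> \<Union>\<T>"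
      then obtain X Y where "X \<in> \<T>" "Y \<in> \<T>" "x \<in> X" "y \<in> Y" by auto
      then show "inf x y \<in> \<Union>\<T>" using h pf unfolding proper_filter_def
        by (metis UnionI subsetD)
    qed
    ultimately show "\<Union>\<T> \<in> ?Th" unfolding proper_filter_def by auto
  qed
  have prime: "(sup a b \<in> T \<longleftrightarrow> a \<in> T \<or> b \<in> T) \<and> (inf a b \<in> T \<longleftrightarrow> a \<in> T \<and> b \<in> T)"
    if T: "T \<in> TPTh ?Th" for a b T
  proof -
    have tp: "proper_filter T" and tpa: "\<And>\<T>. \<T> \<subseteq> ?Th \<Longrightarrow> \<T> \<noteq> {} \<Longrightarrow> T = \<Inter>\<T> \<Longrightarrow> T \<in> \<T>"
      using T unfolding TPTh_def totally_prime_def by auto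
    have up: "\<And>x y. x \<in> T \<Longrightarrow> x \<le> y \<Longrightarrow> y \<in> T" and inf: "\<And>x y. x \<in> T \<Longrightarrow> y \<in> T \<Longrightarrow> inf x y \<in> T"
      using tp unfolding proper_filter_def by auto
    have m: "inf a b \<in> T \<longleftrightarrow> a \<in> T \<and> b \<in> T" using up inf by auto
    have j: "sup a b \<in> T \<longleftrightarrow> a \<in> T \<or> b \<in> T"
    proof
      assume s: "sup a b \<in> T"
      show "a \<in> T \<or> b \<in> T"
      proof (rule ccontr)
        assume n: "\<not> (a \<in> T \<or> b \<in> T)"
        define \<T> where "\<T> = {F \<in> {genf T a, genf T b}. F \<noteq> UNIV}"
        have sub: "genf T a \<inter> genf T b \<subseteq> T" using genf_sup[OF tp s] .
        have le: "\<Inter>\<T> \<subseteq> genf T a \<inter> genf T b" unfolding \<T>_def by auto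
        have "\<And>c. T \<subseteq> genf T c" unfolding genf_def using inf_le1 by blast
        then have ge: "T \<subseteq> \<Inter>\<T>" unfolding \<T>_def by auto
        show False
        proof (cases "\<T> = {}")
          case True
          then have "T = UNIV" using sub le by auto
          then show False using tp unfolding proper_filter_def by auto
        next
          case False
          have "\<T> \<subseteq> ?Th" unfolding \<T>_def using genf_filter[OF tp] by auto
          moreover have "T = \<Inter>\<T>" using sub le ge by auto
          ultimately have "T \<in> \<T>" using tpa False by auto
          then show False unfolding \<T>_def using n genf_mem[OF tp, of a] genf_mem[OF tp, of b] by auto
        qed
      qed
    next
      assume "a \<in> T \<or> b \<in> T" then show "sup a b \<in> T" using up by auto
    qed
    show ?thesis using m j by auto
  qed
  show ?thesis unfolding distributive_abstract_logic_def using al ch prime by blast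
qed

end
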